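(* For all integers $\alpha\ge2$, $0\le m\le\alpha$ and $n\in\mathbb Z$, $$r_{\alpha-1,n}r_{\alpha-1,n+1}c_{\alpha,m,n}=r_{\alpha,n}r_{\alpha-1,n+1}c_{\alpha-1,m,n}+r_{\alpha-1,n}r_{\alpha,n+1}c_{\alpha-1,m-1,n}+r_{\alpha,n}r_{\alpha,n+1}c_{\alpha-2,m-1,n}.$$
   Context: Let $(r_{1,n})_{n\in\mathbb Z}$ be a sequence of elements of a field $K$. Set $r_{0,n}=1$ and for $\alpha\ge1$, $r_{\alpha,n}=\det_{1\le i,j\le\alpha}(r_{1,n+i+j-1-\alpha})$. For $p\ge0$ define $s_p(j)=j$ if $j\le p$ and $s_p(j)=j+1$ if $j>p$. For $\alpha\ge1$ and $0\le m\le\alpha$ define the "Wronskian with a defect" $$c_{\alpha,m,n}=\det_{1\le i,j\le\alpha}\bigl(r_{1,\,n+i+s_{\alpha-m}(j)-\alpha-1}\bigr),$$ set $c_{0,0,n}=1$, and set $c_{\alpha,m,n}=0$ whenever $m<0$ or $m>\alpha$. (Thus $c_{\alpha,0,n}=r_{\alpha,n}$ and $c_{\alpha,\alpha,n}=r_{\alpha,n+1}$.) *)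

theory Defs
  imports "Jordan_Normal_Form.Determinant"
begin

text \<open>The shift map s_p on 1-based column indices.\<close>
definition s_shift :: "nat \<Rightarrow> nat \<Rightarrow> nat" where
  "s_shift p j = (if j \<le> p then j else j + 1)"

text \<open>Hankel determinants r_{alpha,n}; matrix indices are 0-based, so entry (i,j) of the
  paper (1-based) is entry (i-1,j-1) here.  For alpha = 0 the empty determinant is 1.\<close>
definition hankel_r :: "(int \<Rightarrow> 'a::field) \<Rightarrow> nat \<Rightarrow> int \<Rightarrow> 'a" where
  "hankel_r r1 \<alpha> n = det (mat \<alpha> \<alpha> (\<lambda>(i,j).
      r1 (n + int (i+1) + int (j+1) - 1 - int \<alpha>)))"

definition wronsk_c :: "(int \<Rightarrow> 'a::field) \<Rightarrow> nat \<Rightarrow> int \<Rightarrow> int \<Rightarrow> 'a" where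
  "wronsk_c r1 \<alpha> m n =
     (if m < 0 \<or> m > int \<alpha> then 0
      else if \<alpha> = 0 then 1
      else det (mat \<alpha> \<alpha> (\<lambda>(i,j).
        r1 (n + int (i+1) + int (s_shift (\<alpha> - nat m) (j+1)) - int \<alpha> - 1))))"

end

theory Submission
  imports Defs "Jordan_Normal_Form.Char_Poly"
begin
definition Dt :: "nat \<Rightarrow> (nat \<Rightarrow> nat \<Rightarrow> 'a::comm_ring_1) \<Rightarrow> 'a" where
  "Dt k f = det (mat k k (\<lambda>(i,j). f i j))"

lemma Dt_cong: assumes "\<And>i j. i < k \<Longrightarrow> j < k \<Longrightarrow> f i j = g i j"
  shows "Dt k f = Dt k g"
proof -
  have "mat k k (\<lambda>(i,j). f i j) = mat k k (\<lambda>(i,j). g i j)"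
    by (rule eq_matI) (auto simp: assms)
  thus ?thesis unfolding Dt_def by simp
qed

lemma cofactor_Dt: assumes "r < n" "c < n"
  shows "cofactor (mat n n (\<lambda>(i,j). f i j)) r c = (-1)^(r+c) *
     Dt (n-1) (\<lambda>i j. f (if i < r then i else Suc i) (if j < c then j else Suc j))"
proof -
  have "mat_delete (mat n n (\<lambda>(i,j). f i j)) r c = mat (n-1) (n-1) (\<lambda>(i,j). f (if i < r then i else Suc i) (if j < c then j else Suc j))"
    unfolding mat_delete_def by (rule eq_matI) auto
  thus ?thesis unfolding cofactor_def Dt_def by simp
qed

lemma unit_row: assumes r: "r < n" and q: "q < n"
  and f: "\<And>j. j < n \<Longrightarrow> f r j = (if j = q then c else 0)"
  shows "Dt n f = c * (-1)^(r+q) *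
     Dt (n-1) (\<lambda>i j. f (if i < r then i else Suc i) (if j < q then j else Suc j))"
proof -
  have "Dt n f = (\<Sum>j<n. mat n n (\<lambda>(i,j). f i j) $$ (r,j) * cofactor (mat n n (\<lambda>(i,j). f i j)) r j)"
    unfolding Dt_def by (rule laplace_expansion_row[OF _ r]) auto
  also have "\<dots> = (\<Sum>j<n. (if j = q then c * cofactor (mat n n (\<lambda>(i,j). f i j)) r q else 0))"
    by (rule sum.cong) (auto simp: f r)
  also have "\<dots> = c * cofactor (mat n n (\<lambda>(i,j). f i j)) r q" using q by simp
  finally show ?thesis using cofactor_Dt[OF r q, of f] by (simp add: mult.assoc)
qed

lemma Dt_transpose: "Dt n f = Dt n (\<lambda>i j. f j i)"
proof -
  have "det (mat n n (\<lambda>(i,j). f i j)) = det ((mat n n (\<lambda>(i,j). f i j))\<^sup>T)"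
    by (rule det_transpose[symmetric]) auto
  also have "(mat n n (\<lambda>(i,j). f i j))\<^sup>T = mat n n (\<lambda>(i,j). f j i)"
    by (rule eq_matI) auto
  finally show ?thesis unfolding Dt_def .
qed

lemma unit_col: assumes r: "r < n" and q: "q < n"
  and f: "\<And>i. i < n \<Longrightarrow> f i q = (if i = r then c else 0)"
  shows "Dt n f = c * (-1)^(r+q) *
     Dt (n-1) (\<lambda>i j. f (if i < r then i else Suc i) (if j < q then j else Suc j))"
proof -
  have "Dt n f = Dt n (\<lambda>i j. f j i)" by (rule Dt_transpose)
  also have "\<dots> = c * (-1)^(q+r) * Dt (n-1) (\<lambda>i j. f (if j < r then j else Suc j) (if i < q then i else Suc i))"
    by (rule unit_row[OF q r]) (auto simp: f)
  also have "Dt (n-1) (\<lambda>i j. f (if j < r then j else Suc j) (if i < q then i else Suc i))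
    = Dt (n-1) (\<lambda>i j. f (if i < r then i else Suc i) (if j < q then j else Suc j))"
    by (rule Dt_transpose[symmetric])
  finally show ?thesis by (simp add: add.commute)
qed

lemma Dt_one: "Dt (Suc 0) h = h 0 0" unfolding Dt_def
    by (subst det_single) auto

lemma Dt_two: "Dt 2 g = g 0 0 * g 1 1 - g 0 1 * g 1 0"
proof -
  have "Dt 2 g = g 0 0 * (-1)^(0+0) * Dt 1 (\<lambda>i j. g (Suc i) (Suc j)) + g 0 1 * (-1)^(0+1) * Dt 1 (\<lambda>i j. g (Suc i) (if j < 1 then j else Suc j))"
    unfolding Dt_def
    by (subst laplace_expansion_row[of _ 2 0]) (auto simp: cofactor_Dt numeral_2_eq_2 lessThan_Suc Dt_def)
  then show ?thesis by (simp add: Dt_one)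
qed
lemma mid_units: assumes "\<And>i j. i < m+2 \<Longrightarrow> 1 \<le> j \<Longrightarrow> j \<le> m \<Longrightarrow> g i j = (if i = j then 1 else 0)"
  shows "Dt (m+2) g = g 0 0 * g (m+1) (m+1) - g 0 (m+1) * g (m+1) 0"
  using assms
proof (induction m arbitrary: g)
  case 0
  then show ?case using Dt_two[of g] by (simp add: numeral_2_eq_2)
next
  case (Suc m)
  have "Dt (Suc m + 2) g = 1 * (-1)^(1+1) * Dt (Suc m + 2 - 1) (\<lambda>i j. g (if i < 1 then i else Suc i) (if j < 1 then j else Suc j))"
    by (rule unit_col) (use Suc.prems in auto)
  also have "\<dots> = Dt (m + 2) (\<lambda>i j. g (if i < 1 then i else Suc i) (if j < 1 then j else Suc j))"
    by simp
  also have "\<dots> = g 0 0 * g (m+2) (m+2) - g 0 (m+2) * g (m+2) 0"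
    by (subst Suc.IH) (use Suc.prems in auto)
  finally show ?case by simp
qed
lemma DJ_idom:
  fixes f :: "nat \<Rightarrow> nat \<Rightarrow> 'a::idom"
  assumes nz: "Dt (k+2) f \<noteq> 0"
  shows "Dt (k+2) f * Dt k (\<lambda>i j. f (Suc i) (Suc j)) =
     Dt (k+1) (\<lambda>i j. f (Suc i) (Suc j)) * Dt (k+1) f
   - Dt (k+1) (\<lambda>i j. f i (Suc j)) * Dt (k+1) (\<lambda>i j. f (Suc i) j)"
proof -
  define n where "n = k+2"
  define l where "l = k+1"
  define A where "A = mat n n (\<lambda>(i,j). f i j)"
  have A: "A \<in> carrier_mat n n" unfolding A_def by simp
  define adj where "adj = adj_mat A"
  have adj: "adj \<in> carrier_mat n n" and Aadj: "A * adj = det A \<cdot>\<^sub>m 1\<^sub>m n"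
    using adj_mat[OF A] unfolding adj_def by auto
  have adj_ix: "adj $$ (i,j) = cofactor A j i" if "i < n" "j < n" for i j
    unfolding adj_def adj_mat_def using A that by auto
  define B where "B = mat n n (\<lambda>(i,j). if j = 0 then adj $$ (i,0) else if j = l then adj $$ (i,l) else (if i = j then 1 else 0))"
  have B: "B \<in> carrier_mat n n" unfolding B_def by simp
  have dA: "det A = Dt (k+2) f" unfolding A_def Dt_def n_def by simp
  have "det B = Dt (k+2) (\<lambda>i j. B $$ (i,j))"
    unfolding Dt_def n_def[symmetric]
    by (rule arg_cong[of _ _ det], rule eq_matI) (auto simp: B_def)
  also have "\<dots> = B $$ (0,0) * B $$ (k+1,k+1) - B $$ (0,k+1) * B $$ (k+1,0)"
    by (rule mid_units) (auto simp: B_def n_def l_def)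
  also have "\<dots> = cofactor A 0 0 * cofactor A l l - cofactor A l 0 * cofactor A 0 l"
    by (simp add: B_def n_def l_def adj_ix)
  finally have dB: "det B = cofactor A 0 0 * cofactor A l l - cofactor A l 0 * cofactor A 0 l" .
  have c00: "cofactor A 0 0 = Dt (k+1) (\<lambda>i j. f (Suc i) (Suc j))"
    unfolding A_def by (subst cofactor_Dt) (auto simp: n_def)
  have cll: "cofactor A l l = Dt (k+1) f"
    unfolding A_def by (subst cofactor_Dt) (auto simp: n_def l_def intro!: Dt_cong)
  have cl0: "cofactor A l 0 = (-1)^l * Dt (k+1) (\<lambda>i j. f i (Suc j))"
    unfolding A_def by (subst cofactor_Dt) (auto simp: n_def l_def intro!: Dt_cong)
  have c0l: "cofactor A 0 l = (-1)^l * Dt (k+1) (\<lambda>i j. f (Suc i) j)"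
    unfolding A_def by (subst cofactor_Dt) (auto simp: n_def l_def intro!: Dt_cong)
  have sq: "((-1::'a)^l) * (-1)^l = 1" by (simp add: power_add[symmetric])
  have dB2: "det B = Dt (k+1) (\<lambda>i j. f (Suc i) (Suc j)) * Dt (k+1) f
   - Dt (k+1) (\<lambda>i j. f i (Suc j)) * Dt (k+1) (\<lambda>i j. f (Suc i) j)"
    unfolding dB c00 cll cl0 c0l
    by (metis (no_types, lifting) mult.assoc mult.left_commute mult_1 sq)
  define h where "h i j = (if j = 0 then det A * (if i = 0 then 1 else 0) else if j = l then det A * (if i = l then 1 else 0) else f i j)" for i j
  have AB: "A * B = mat n n (\<lambda>(i,j). h i j)"
  proof (rule eq_matI)
    fix i j assume ij: "i < dim_row (mat n n (\<lambda>(i,j). h i j))" "j < dim_col (mat n n (\<lambda>(i,j). h i j))"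
    hence i: "i < n" and j: "j < n" by auto
    have e: "(A * B) $$ (i,j) = row A i \<bullet> col B j" using A B i j by simp
    show "(A * B) $$ (i,j) = mat n n (\<lambda>(i,j). h i j) $$ (i,j)"
    proof (cases "j = 0 \<or> j = l")
      case True
      then have "col B j = col adj j"
        using adj B i j by (auto simp: B_def intro!: eq_vecI)
      then have "(A * B) $$ (i,j) = (A * adj) $$ (i,j)" using e A adj i j by simp
      also have "\<dots> = det A * (if i = j then 1 else 0)" unfolding Aadj using i j by simp
      finally show ?thesis using True i j unfolding h_def by (auto simp: l_def)
    next
      case False
      have "row A i \<bullet> col B j = (\<Sum>t<n. f i t * (if t = j then 1 else 0))"
        unfolding scalar_prod_def using A B i j False
        by (auto simp: A_def B_def atLeast0LessThan intro!: sum.cong)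
      also have "\<dots> = f i j" using j by (simp add: if_distrib[of "(*) _"] cong: if_cong)
      finally show ?thesis using e False i j unfolding h_def by simp
    qed
  qed (use A B in auto)
  have "det (A * B) = Dt (k+2) h" unfolding AB Dt_def n_def ..
  also have "\<dots> = det A * (-1)^(0+0) * Dt (k+2-1) (\<lambda>i j. h (if i < 0 then i else Suc i) (if j < 0 then j else Suc j))"
    by (rule unit_col) (auto simp: h_def l_def)
  also have "Dt (k+2-1) (\<lambda>i j. h (if i < 0 then i else Suc i) (if j < 0 then j else Suc j)) = Dt (k+1) (\<lambda>i j. h (Suc i) (Suc j))"
    by simp
  also have "\<dots> = det A * (-1)^(k+k) * Dt (k+1-1) (\<lambda>i j. h (Suc (if i < k then i else Suc i)) (Suc (if j < k then j else Suc j)))"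
    by (rule unit_col) (auto simp: h_def l_def)
  also have "Dt (k+1-1) (\<lambda>i j. h (Suc (if i < k then i else Suc i)) (Suc (if j < k then j else Suc j))) = Dt k (\<lambda>i j. f (Suc i) (Suc j))"
    by (auto simp: h_def l_def intro!: Dt_cong)
  finally have dAB: "det (A * B) = det A * (det A * Dt k (\<lambda>i j. f (Suc i) (Suc j)))"
    by (simp add: power_add[symmetric] mult_2[symmetric])
  have "det A * det B = det A * (det A * Dt k (\<lambda>i j. f (Suc i) (Suc j)))"
    using dAB det_mult[OF A B] by simp
  then have "det B = det A * Dt k (\<lambda>i j. f (Suc i) (Suc j))"
    using nz dA by simp
  then show ?thesis using dB2 dA by simp
qed
lemma poly_Dt: "poly (Dt n G) a = Dt n (\<lambda>i j. poly (G i j) a)"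
proof -
  have "map_mat (\<lambda>p. poly p a) (mat n n (\<lambda>(i,j). G i j)) = mat n n (\<lambda>(i,j). poly (G i j) a)"
    by (rule eq_matI) auto
  then show ?thesis unfolding Dt_def using comm_ring_hom.hom_det[OF poly_hom.comm_ring_hom_axioms, of a "mat n n (\<lambda>(i,j). G i j)"] by simp
qed

lemma DJ:
  fixes f :: "nat \<Rightarrow> nat \<Rightarrow> 'a::field"
  shows "Dt (k+2) f * Dt k (\<lambda>i j. f (Suc i) (Suc j)) =
     Dt (k+1) (\<lambda>i j. f (Suc i) (Suc j)) * Dt (k+1) f
   - Dt (k+1) (\<lambda>i j. f i (Suc j)) * Dt (k+1) (\<lambda>i j. f (Suc i) j)"
proof -
  define F where "F i j = [:f i j:] + (if i = j then [:0,1:] else 0)" for i j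
  define A0 where "A0 = mat (k+2) (k+2) (\<lambda>(i,j). - f i j)"
  have A0: "A0 \<in> carrier_mat (k+2) (k+2)" unfolding A0_def by simp
  have "mat (k+2) (k+2) (\<lambda>(i,j). F i j) = char_poly_matrix A0"
    unfolding char_poly_matrix_def A0_def F_def by (rule eq_matI) auto
  then have "Dt (k+2) F = char_poly A0" unfolding Dt_def char_poly_def by simp
  moreover have "coeff (char_poly A0) (k+2) = 1" using degree_monic_char_poly[OF A0] by simp
  ultimately have nz: "Dt (k+2) F \<noteq> 0" by auto
  have e: "poly (F i j) 0 = f i j" for i j unfolding F_def by simp
  from arg_cong[OF DJ_idom[OF nz], of "\<lambda>p. poly p 0"]
  show ?thesis by (simp add: poly_Dt e)
qed


lemma hankel_Dt: "hankel_r r1 \<beta> n' = Dt \<beta> (\<lambda>i j. r1 (n' + int (i+1) + int (j+1) - 1 - int \<beta>))"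
  unfolding hankel_r_def Dt_def by simp

lemma wronsk_Dt: assumes "0 \<le> m'" "m' \<le> int \<beta>"
  shows "wronsk_c r1 \<beta> m' n = Dt \<beta> (\<lambda>i j. r1 (n + int (i+1) + int (if j < \<beta> - nat m' then j + 1 else j + 2) - int \<beta> - 1))"
proof (cases "\<beta> = 0")
  case True
  then show ?thesis using assms unfolding wronsk_c_def Dt_def by simp
next
  case False
  then show ?thesis using assms unfolding wronsk_c_def Dt_def s_shift_def
    by (auto intro!: arg_cong[of _ _ det] eq_matI)
qed

lemma wronsk_out: assumes "m' < 0 \<or> m' > int \<beta>" shows "wronsk_c r1 \<beta> m' n = 0"
  using assms unfolding wronsk_c_def by auto

theorem mainTheorem4:
  fixes r1 :: "int \<Rightarrow> 'a::field" and \<alpha> :: nat and m n :: int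
  assumes "\<alpha> \<ge> 2" and "0 \<le> m" and "m \<le> int \<alpha>"
  shows "hankel_r r1 (\<alpha>-1) n * hankel_r r1 (\<alpha>-1) (n+1) * wronsk_c r1 \<alpha> m n
       = hankel_r r1 \<alpha> n * hankel_r r1 (\<alpha>-1) (n+1) * wronsk_c r1 (\<alpha>-1) m n
       + hankel_r r1 (\<alpha>-1) n * hankel_r r1 \<alpha> (n+1) * wronsk_c r1 (\<alpha>-1) (m-1) n
       + hankel_r r1 \<alpha> n * hankel_r r1 \<alpha> (n+1) * wronsk_c r1 (\<alpha>-2) (m-1) n"
proof -
  obtain K where aK: "\<alpha> = K + 2" using assms(1) by (metis add.commute le_Suc_ex)
  define q where "q = \<alpha> - nat m"
  have q: "q \<le> K + 2" unfolding q_def aK by simp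
  have mq: "m = int (K+2) - int q" using assms(2,3) unfolding q_def aK by simp
  define x where "x t = r1 (n - int \<alpha> - 1 + int t)" for t :: nat
  define e where "e j = (if j = q then (1::'a) else 0)" for j
  define Af where "Af i j = (if i = 0 then e j else x (i+j+1))" for i j
  define Qf where "Qf i j = (if j = K+2 then (if i = 1 then 1 else 0) else if i = 0 then e j else x (i+j+1))" for i j
  define R where "R = hankel_r r1 \<alpha> n"
  define R' where "R' = hankel_r r1 \<alpha> (n+1)"
  define S where "S = hankel_r r1 (\<alpha>-1) n"
  define S' where "S' = hankel_r r1 (\<alpha>-1) (n+1)"
  define C where "C = wronsk_c r1 \<alpha> m n"
  define C1 where "C1 = wronsk_c r1 (\<alpha>-1) m n"
  define C2 where "C2 = wronsk_c r1 (\<alpha>-1) (m-1) n"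
  define C3 where "C3 = wronsk_c r1 (\<alpha>-2) (m-1) n"
  define E where "E = Dt (K+2) Af"
  define G where "G = Dt (K+2) (\<lambda>i j. Af i (Suc j))"
  define D2 where "D2 = Dt (K+2) (\<lambda>i j. if i = 0 then e j else x (i+j+2))"
  define D4 where "D4 = Dt (K+1) (\<lambda>i j. if i = 0 then e (Suc j) else x (i+j+3))"
  define \<sigma> where "\<sigma> = ((-1::'a) ^ q)"
  have hR: "R = Dt (K+2) (\<lambda>i j. x (i+j+2))"
    unfolding R_def hankel_Dt aK x_def by (rule Dt_cong) (auto intro!: arg_cong[of _ _ r1])
  have hR': "R' = Dt (K+2) (\<lambda>i j. x (i+j+3))"
    unfolding R'_def hankel_Dt aK x_def by (rule Dt_cong) (auto intro!: arg_cong[of _ _ r1])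
  have km: "K + 2 - 1 = K + 1" by simp
  have hS: "S = Dt (K+1) (\<lambda>i j. x (i+j+3))"
    unfolding S_def hankel_Dt aK x_def km by (rule Dt_cong) (auto intro!: arg_cong[of _ _ r1])
  have hS': "S' = Dt (K+1) (\<lambda>i j. x (i+j+4))"
    unfolding S'_def hankel_Dt aK x_def km by (rule Dt_cong) (auto intro!: arg_cong[of _ _ r1])
  have dj1: "Dt (K+3) Af * Dt (K+1) (\<lambda>i j. Af (Suc i) (Suc j)) =
     Dt (K+2) (\<lambda>i j. Af (Suc i) (Suc j)) * Dt (K+2) Af
   - Dt (K+2) (\<lambda>i j. Af i (Suc j)) * Dt (K+2) (\<lambda>i j. Af (Suc i) j)"
    using DJ[of "K+1" Af] by (simp add: eval_nat_numeral)
  have sq: "\<sigma> * \<sigma> = 1" unfolding \<sigma>_def by (simp add: power_add[symmetric] mult_2[symmetric] power_mult)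
  have hC: "C = Dt (K+2) (\<lambda>i j. x (i + (if j < q then j else Suc j) + 2))"
    unfolding C_def using assms(2,3) unfolding aK
    by (subst wronsk_Dt) (auto simp: x_def q_def aK intro!: Dt_cong arg_cong[of _ _ r1])
  have dAf: "Dt (K+3) Af = \<sigma> * C"
  proof -
    have "Dt (K+3) Af = 1 * (-1)^(0+q) * Dt (K+3-1) (\<lambda>i j. Af (if i < 0 then i else Suc i) (if j < q then j else Suc j))"
      by (rule unit_row) (use q in \<open>auto simp: Af_def e_def\<close>)
    also have "\<dots> = \<sigma> * C" unfolding hC \<sigma>_def
      by (auto simp: Af_def intro!: Dt_cong arg_cong[of _ _ x])
    finally show ?thesis .
  qed
  have a1: "Dt (K+1) (\<lambda>i j. Af (Suc i) (Suc j)) = S" unfolding hS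
    by (auto simp: Af_def intro!: Dt_cong arg_cong[of _ _ x])
  have a2: "Dt (K+2) (\<lambda>i j. Af (Suc i) (Suc j)) = R'" unfolding hR'
    by (auto simp: Af_def intro!: Dt_cong arg_cong[of _ _ x])
  have a3: "Dt (K+2) (\<lambda>i j. Af (Suc i) j) = R" unfolding hR
    by (auto simp: Af_def intro!: Dt_cong arg_cong[of _ _ x])
  have eq1: "\<sigma> * C * S = R' * E - G * R"
    using dj1 unfolding dAf a1 a2 a3 E_def[symmetric] G_def[symmetric] by (simp add: mult.commute)
  have hG: "G = - \<sigma> * C1"
  proof (cases "q = 0")
    case True
    have "G = 0 * (-1)^(0+0) * Dt (K+2-1) (\<lambda>i j. Af (if i < 0 then i else Suc i) (Suc (if j < 0 then j else Suc j)))"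
      unfolding G_def by (rule unit_row) (use True in \<open>auto simp: Af_def e_def\<close>)
    moreover have "C1 = 0" unfolding C1_def using True mq aK by (intro wronsk_out) auto
    ultimately show ?thesis by simp
  next
    case False
    have "G = 1 * (-1)^(0+(q-1)) * Dt (K+2-1) (\<lambda>i j. Af (if i < 0 then i else Suc i) (Suc (if j < q-1 then j else Suc j)))"
      unfolding G_def by (rule unit_row) (use False q in \<open>auto simp: Af_def e_def\<close>)
    also have "\<dots> = (-1)^(q-1) * C1" unfolding C1_def using False assms(2,3) unfolding aK
      by (subst wronsk_Dt) (auto simp: Af_def x_def q_def aK intro!: Dt_cong arg_cong[of _ _ r1])
    also have "(-1::'a)^(q-1) = - \<sigma>"
    proof -
      obtain q' where q': "q = Suc q'" using False by (cases q) auto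
      show ?thesis unfolding \<sigma>_def q' by simp
    qed
    finally show ?thesis by simp
  qed
  have hD2: "D2 = \<sigma> * C2"
  proof (cases "q = K+2")
    case True
    have "D2 = 0 * (-1)^(0+0) * Dt (K+2-1) (\<lambda>i j. (\<lambda>i j. if i = 0 then e j else x (i+j+2)) (if i < 0 then i else Suc i) (if j < 0 then j else Suc j))"
      unfolding D2_def by (rule unit_row) (use True in \<open>auto simp: e_def\<close>)
    moreover have "C2 = 0" unfolding C2_def using True mq by (intro wronsk_out) auto
    ultimately show ?thesis by simp
  next
    case False
    have "D2 = 1 * (-1)^(0+q) * Dt (K+2-1) (\<lambda>i j. (\<lambda>i j. if i = 0 then e j else x (i+j+2)) (if i < 0 then i else Suc i) (if j < q then j else Suc j))"
      unfolding D2_def by (rule unit_row) (use False q in \<open>auto simp: e_def\<close>)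
    also have "\<dots> = \<sigma> * C2" unfolding C2_def \<sigma>_def using False q assms(2,3) unfolding aK
      by (subst wronsk_Dt) (auto simp: x_def q_def aK intro!: Dt_cong arg_cong[of _ _ r1])
    finally show ?thesis .
  qed
  have hD4: "D4 = - \<sigma> * C3"
  proof (cases "q = 0 \<or> q = K+2")
    case True
    have "D4 = 0 * (-1)^(0+0) * Dt (K+1-1) (\<lambda>i j. (\<lambda>i j. if i = 0 then e (Suc j) else x (i+j+3)) (if i < 0 then i else Suc i) (if j < 0 then j else Suc j))"
      unfolding D4_def by (rule unit_row) (use True in \<open>auto simp: e_def\<close>)
    moreover have "C3 = 0" unfolding C3_def using True mq aK by (intro wronsk_out) auto
    ultimately show ?thesis by simp
  next
    case False
    have "D4 = 1 * (-1)^(0+(q-1)) * Dt (K+1-1) (\<lambda>i j. (\<lambda>i j. if i = 0 then e (Suc j) else x (i+j+3)) (if i < 0 then i else Suc i) (if j < q-1 then j else Suc j))"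
      unfolding D4_def by (rule unit_row) (use False q in \<open>auto simp: e_def\<close>)
    also have "\<dots> = (-1)^(q-1) * C3" unfolding C3_def using False q assms(2,3) unfolding aK
      by (subst wronsk_Dt) (auto simp: x_def q_def aK intro!: Dt_cong arg_cong[of _ _ r1])
    also have "(-1::'a)^(q-1) = - \<sigma>"
    proof -
      obtain q' where q': "q = Suc q'" using False by (cases q) auto
      show ?thesis unfolding \<sigma>_def q' by simp
    qed
    finally show ?thesis by simp
  qed
  have dj2: "Dt (K+3) Qf * Dt (K+1) (\<lambda>i j. Qf (Suc i) (Suc j)) =
     Dt (K+2) (\<lambda>i j. Qf (Suc i) (Suc j)) * Dt (K+2) Qf
   - Dt (K+2) (\<lambda>i j. Qf i (Suc j)) * Dt (K+2) (\<lambda>i j. Qf (Suc i) j)"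
    using DJ[of "K+1" Qf] by (simp add: eval_nat_numeral)
  have q1: "Dt (K+3) Qf = (-1)^(1+(K+2)) * D2"
  proof -
    have "Dt (K+3) Qf = 1 * (-1)^(1+(K+2)) * Dt (K+3-1) (\<lambda>i j. Qf (if i < 1 then i else Suc i) (if j < K+2 then j else Suc j))"
      by (rule unit_col) (auto simp: Qf_def)
    also have "Dt (K+3-1) (\<lambda>i j. Qf (if i < 1 then i else Suc i) (if j < K+2 then j else Suc j)) = D2"
      unfolding D2_def by (auto simp: Qf_def intro!: Dt_cong arg_cong[of _ _ x])
    finally show ?thesis by simp
  qed
  have q2: "Dt (K+1) (\<lambda>i j. Qf (Suc i) (Suc j)) = S" unfolding hS
    by (auto simp: Qf_def intro!: Dt_cong arg_cong[of _ _ x])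
  have q3: "Dt (K+2) (\<lambda>i j. Qf (Suc i) (Suc j)) = (-1)^(0+(K+1)) * S'"
  proof -
    have "Dt (K+2) (\<lambda>i j. Qf (Suc i) (Suc j)) = 1 * (-1)^(0+(K+1)) * Dt (K+2-1) (\<lambda>i j. Qf (Suc (if i < 0 then i else Suc i)) (Suc (if j < K+1 then j else Suc j)))"
      by (rule unit_col) (auto simp: Qf_def)
    also have "Dt (K+2-1) (\<lambda>i j. Qf (Suc (if i < 0 then i else Suc i)) (Suc (if j < K+1 then j else Suc j))) = S'"
      unfolding hS' by (auto simp: Qf_def intro!: Dt_cong arg_cong[of _ _ x])
    finally show ?thesis by simp
  qed
  have q4: "Dt (K+2) Qf = E" unfolding E_def
    by (auto simp: Qf_def Af_def intro!: Dt_cong)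
  have q5: "Dt (K+2) (\<lambda>i j. Qf i (Suc j)) = (-1)^(1+(K+1)) * D4"
  proof -
    have "Dt (K+2) (\<lambda>i j. Qf i (Suc j)) = 1 * (-1)^(1+(K+1)) * Dt (K+2-1) (\<lambda>i j. Qf (if i < 1 then i else Suc i) (Suc (if j < K+1 then j else Suc j)))"
      by (rule unit_col) (auto simp: Qf_def)
    also have "Dt (K+2-1) (\<lambda>i j. Qf (if i < 1 then i else Suc i) (Suc (if j < K+1 then j else Suc j))) = D4"
      unfolding D4_def by (auto simp: Qf_def intro!: Dt_cong arg_cong[of _ _ x])
    finally show ?thesis by simp
  qed
  have q6: "Dt (K+2) (\<lambda>i j. Qf (Suc i) j) = R" unfolding hR
    by (auto simp: Qf_def intro!: Dt_cong arg_cong[of _ _ x])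
  have dj2': "(-1)^(1+(K+2)) * D2 * S = (-1)^(0+(K+1)) * S' * E - (-1)^(1+(K+1)) * D4 * R"
    using dj2 unfolding q1 q2 q3 q4 q5 q6 by (simp add: mult.commute)
  have eq2: "D2 * S = S' * E + D4 * R"
  proof -
    have "(-1::'a)^(1+(K+2)) = - ((-1)^K)" "(-1::'a)^(0+(K+1)) = - ((-1)^K)" "(-1::'a)^(1+(K+1)) = (-1)^K"
      by (simp_all add: power_add)
    with dj2' have "(-1)^K * (D2 * S - S' * E - D4 * R) = 0"
      by (simp add: algebra_simps)
    then have "D2 * S - S' * E - D4 * R = 0" by simp
    then show ?thesis by (simp add: algebra_simps)
  qed
  have eq2': "\<sigma> * C2 * S = S' * E - \<sigma> * C3 * R" using eq2 unfolding hD2 hD4 by simp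
  have eq1': "\<sigma> * C * S = R' * E + \<sigma> * C1 * R" using eq1 unfolding hG by simp
  have "\<sigma> * (S * S' * C) = \<sigma> * (R * S' * C1 + S * R' * C2 + R * R' * C3)"
  proof -
    have "\<sigma> * (S * S' * C) = S' * (\<sigma> * C * S)" by (simp add: ac_simps)
    also have "\<dots> = S' * R' * E + \<sigma> * (R * S' * C1)" unfolding eq1' by (simp add: algebra_simps)
    also have "S' * R' * E = R' * (\<sigma> * C2 * S) + \<sigma> * (R * R' * C3)" unfolding eq2' by (simp add: algebra_simps)
    finally show ?thesis by (simp add: algebra_simps)
  qed
  then have "\<sigma> * \<sigma> * (S * S' * C) = \<sigma> * \<sigma> * (R * S' * C1 + S * R' * C2 + R * R' * C3)"
    by (simp add: mult.assoc)
  then show ?thesis unfolding sq R_def R'_def S_def S'_def C_def C1_def C2_def C3_def by simp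
qed

end
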